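(* Let $a\in(0,1)$, $b>0$, $m\in\mathbb{R}$, and for $t\in(0,1)$ let \[ G_m(t)=F(1-a,b;2b+1;t)-(1-t)^{1-m}F(1-a,b+1;2b+1;t). \] Let $m_0=\frac{a+2b}{1+2b}$ and define \[ E^+=\{m\le m_0\}\cap\Bigl(\{a+b\ge1>m\}\cup\{m<a+b<1\}\cup\{m=a+b\le\tfrac12\}\Bigr), \] \[ E^-=\{m\ge m_0\}\cap\Bigl(\{a+b\ge1,\ m\ge1\}\cup\{\tfrac12\le m=a+b<1\}\cup\{a+b<1,\ a+b<m\}\Bigr), \] as sets of triples $(a,b,m)$. (i) If $G_m(t)\ge0$ for all $t\in(0,1)$, then $(a,b,m)\in E^+$. (ii) If $G_m(t)\le0$ for all $t\in(0,1)$, then $(a,b,m)\in E^-$.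
   Context: For real $a,b,c$ with $c\notin\{0,-1,-2,\dots\}$, $F(a,b;c;x)=\sum_{n\ge0}\frac{(a)_n(b)_n}{(c)_n}\frac{x^n}{n!}$ for $x\in(-1,1)$, where $(a)_0=1$ and $(a)_n=a(a+1)\cdots(a+n-1)$. *)

theory Defs
  imports "HOL-Analysis.Analysis"
begin

text \<open>Gauss hypergeometric series F(a,b;c;x) = sum_n (a)_n (b)_n / (c)_n x^n / n!,
  used for x in (-1,1) and c not a nonpositive integer.\<close>
definition hyp2F1 :: "real \<Rightarrow> real \<Rightarrow> real \<Rightarrow> real \<Rightarrow> real" where
  "hyp2F1 a b c x = (\<Sum>n. pochhammer a n * pochhammer b n / pochhammer c n * x ^ n / fact n)"

definition G :: "real \<Rightarrow> real \<Rightarrow> real \<Rightarrow> real \<Rightarrow> real" where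
  "G a b m t = hyp2F1 (1 - a) b (2*b + 1) t
              - (1 - t) powr (1 - m) * hyp2F1 (1 - a) (b + 1) (2*b + 1) t"

definition m0 :: "real \<Rightarrow> real \<Rightarrow> real" where
  "m0 a b = (a + 2*b) / (1 + 2*b)"

definition Eplus :: "(real \<times> real \<times> real) set" where
  "Eplus = {(a,b,m). m \<le> m0 a b \<and>
      ((a + b \<ge> 1 \<and> 1 > m) \<or> (m < a + b \<and> a + b < 1) \<or> (m = a + b \<and> a + b \<le> 1/2))}"

definition Eminus :: "(real \<times> real \<times> real) set" where
  "Eminus = {(a,b,m). m \<ge> m0 a b \<and>
      ((a + b \<ge> 1 \<and> m \<ge> 1) \<or> (1/2 \<le> m \<and> m = a + b \<and> a + b < 1) \<or> (a + b < 1 \<and> a + b < m))}"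

end

theory Submission imports Defs begin

definition hc :: "real \<Rightarrow> real \<Rightarrow> real \<Rightarrow> nat \<Rightarrow> real" where
  "hc p q r n = pochhammer p n * pochhammer q n / pochhammer r n / fact n"

lemma hyp2F1_eq: "hyp2F1 p q r x = (\<Sum>n. hc p q r n * x^n)"
  unfolding hyp2F1_def hc_def by (simp add: algebra_simps)

lemma hc_Suc: assumes "r > 0"
  shows "hc p q r (Suc n) = hc p q r n * ((p+n)*(q+n)/((r+n)*(n+1)))"
proof -
  have "pochhammer r n \<noteq> 0" using assms by (simp add: pochhammer_eq_0_iff) 
  moreover have "r + n \<noteq> 0" using assms by (smt (verit) of_nat_0_le_iff)
  ultimately show ?thesis unfolding hc_def pochhammer_Suc fact_Suc
    by (simp add: field_simps)
qed

lemma hc_nonneg: assumes "p > 0" "q > 0" "r > 0" shows "hc p q r n \<ge> 0"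
  unfolding hc_def using assms by (intro divide_nonneg_nonneg mult_nonneg_nonneg pochhammer_nonneg) auto

lemma hc_0[simp]: "hc p q r 0 = 1" by (simp add: hc_def)

definition be :: "real \<Rightarrow> nat \<Rightarrow> real" where "be s n = pochhammer s n / fact n"

lemma be_sums: assumes "0 \<le> t" "t < 1"
  shows "(\<lambda>n. be s n * t^n) sums (1 - t) powr (-s)"
proof -
  have "(\<lambda>n. ((-s) gchoose n) * (-t)^n) sums (1 + (-t)) powr (-s)"
    by (rule gen_binomial_real) (use assms in auto)
  moreover have "((-s) gchoose n) * (-t)^n = be s n * t^n" for n
    unfolding gbinomial_pochhammer be_def by (simp add: power_minus' field_simps)
  ultimately show ?thesis by simp
qed

lemma be_Suc: "be s (Suc n) = be s n * ((s+n)/(n+1))"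
  unfolding be_def pochhammer_Suc fact_Suc by (simp add: field_simps)

lemma be_pos: "s > 0 \<Longrightarrow> be s n > 0"
  unfolding be_def by (simp add: pochhammer_pos)

lemma hc_upper:
  assumes p: "p > 0" and q: "q > 0" and r: "r > 0" and sg: "\<sigma> > 0" and pq: "p + q < r + \<sigma>"
  shows "\<exists>K. \<forall>t. 0 \<le> t \<and> t < 1 \<longrightarrow> summable (\<lambda>n. hc p q r n * t^n)
            \<and> (\<Sum>n. hc p q r n * t^n) \<le> K * (1 - t) powr (-\<sigma>)"
proof -
  define \<rho> where "\<rho> n = hc p q r n / be \<sigma> n" for n
  obtain N :: nat where N: "p*q/(r+\<sigma>-p-q) \<le> real N" by (meson real_arch_simple)
  have step: "\<rho> (Suc n) \<le> \<rho> n" if "N \<le> n" for n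
  proof -
    have "real N \<le> real n" using that by simp
    hence "p*q/(r+\<sigma>-p-q) \<le> n" using N by linarith
    hence "p*q \<le> n * (r+\<sigma>-p-q)" using pq by (simp add: divide_le_eq mult.commute)
    hence f: "(p+n)*(q+n) \<le> (r+n)*(\<sigma>+n)" using r sg
      by (smt (verit, best) mult_nonneg_nonneg of_nat_0_le_iff distrib_left distrib_right mult.commute)
    have pos: "(r+n)*(\<sigma>+n) > 0" using r sg by (simp add: add_pos_nonneg)
    have b: "be \<sigma> n > 0" using be_pos sg by blast
    have "\<rho> (Suc n) = \<rho> n * ((p+n)*(q+n)/((r+n)*(\<sigma>+n)))"
    proof -
      have "r + n > 0" "\<sigma> + n > 0" "real n + 1 > 0" using r sg by (auto simp: add_pos_nonneg)
      have aux: "X/(R*x) / (S/x) = X/(R*S)" if "x \<noteq> 0" for X R S x :: real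
        using that by (simp add: field_simps)
      have e: "((p+n)*(q+n)/((r+n)*(n+1))) / ((\<sigma>+n)/(n+1)) = (p+n)*(q+n)/((r+n)*(\<sigma>+n))"
        by (rule aux) simp
      have "\<rho> (Suc n) = \<rho> n * (((p+n)*(q+n)/((r+n)*(n+1))) / ((\<sigma>+n)/(n+1)))"
        unfolding \<rho>_def hc_Suc[OF r] be_Suc by simp
      thus ?thesis using e by simp
    qed
    also have "\<dots> \<le> \<rho> n * 1"
      apply (rule mult_left_mono)
      using f pos apply (simp add: divide_le_eq)
      unfolding \<rho>_def using b hc_nonneg[OF p q r] by simp
    finally show ?thesis by simp
  qed
  define M where "M = Max (\<rho> ` {..N})"
  have bound: "\<rho> n \<le> M" for n
  proof (induction n)
    case 0 thus ?case unfolding M_def by (intro Max_ge) auto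
  next
    case (Suc n)
    show ?case
    proof (cases "Suc n \<le> N")
      case True thus ?thesis unfolding M_def by (intro Max_ge) auto
    next
      case False thus ?thesis using step[of n] Suc by simp
    qed
  qed
  have hle: "hc p q r n \<le> M * be \<sigma> n" for n
  proof -
    have b: "be \<sigma> n > 0" using be_pos sg by blast
    have "hc p q r n = \<rho> n * be \<sigma> n" unfolding \<rho>_def using b by simp
    also have "\<dots> \<le> M * be \<sigma> n" using bound[of n] b by (simp add: mult_right_mono)
    finally show ?thesis .
  qed
  show ?thesis
  proof (intro exI allI impI conjI)
    fix t :: real assume t: "0 \<le> t \<and> t < 1"
    have sg': "(\<lambda>n. M * (be \<sigma> n * t^n)) sums (M * (1 - t) powr (-\<sigma>))"
      using be_sums[of t \<sigma>] t by (intro sums_mult) auto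
    have le: "hc p q r n * t^n \<le> M * (be \<sigma> n * t^n)" for n
      using hle[of n] t by (simp add: mult.assoc[symmetric] mult_right_mono)
    have nn: "0 \<le> hc p q r n * t^n" for n using hc_nonneg[OF p q r] t by simp
    show sm: "summable (\<lambda>n. hc p q r n * t^n)"
      by (rule summable_comparison_test[OF _ sums_summable[OF sg']]) (use le nn in auto)
    have "(\<Sum>n. hc p q r n * t^n) \<le> (\<Sum>n. M * (be \<sigma> n * t^n))"
      by (rule suminf_le[OF le sm sums_summable[OF sg']])
    also have "\<dots> = M * (1 - t) powr (-\<sigma>)" using sg' sums_unique by metis
    finally show "(\<Sum>n. hc p q r n * t^n) \<le> M * (1 - t) powr (-\<sigma>)" .
  qed
qed

lemma hyp_summable_le:
  assumes p: "p > 0" and q: "q > 0" and r: "r > 0" and t: "0 \<le> t" "t < 1"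
  shows "summable (\<lambda>n. hc p q r n * t^n)"
proof -
  obtain K where "\<forall>t. 0 \<le> t \<and> t < 1 \<longrightarrow> summable (\<lambda>n. hc p q r n * t^n)
            \<and> (\<Sum>n. hc p q r n * t^n) \<le> K * (1 - t) powr (-(p+q+1))"
    using hc_upper[OF p q r, of "p+q+1"] p q r by auto
  thus ?thesis using t by blast
qed

lemma hyp_at0: "hyp2F1 p q r 0 = 1"
  unfolding hyp2F1_eq by simp

lemma hyp_deriv0:
  assumes p: "p > 0" and q: "q > 0" and r: "r > 0"
  shows "DERIV (hyp2F1 p q r) 0 :> p*q/r"
proof -
  have sm: "summable (\<lambda>n. hc p q r n * (1/2)^n)"
    by (rule hyp_summable_le[OF p q r]) auto
  have "DERIV (\<lambda>x. \<Sum>n. hc p q r n * x^n) 0 :> (\<Sum>n. diffs (hc p q r) n * 0^n)"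
    by (rule termdiffs_strong[OF sm]) simp
  moreover have "(\<Sum>n. diffs (hc p q r) n * 0^n) = p*q/r"
    using hc_Suc[OF r, of p q 0] by (simp add: diffs_def)
  moreover have "hyp2F1 p q r = (\<lambda>x. \<Sum>n. hc p q r n * x^n)"
    by (rule ext) (rule hyp2F1_eq)
  ultimately show ?thesis by simp
qed

lemma F2_lower:
  assumes a: "0 < a" "a < 1" and b: "b > 0" and ab: "a + b < 1" and t: "0 \<le> t" "t < 1"
  shows "hyp2F1 (1-a) (b+1) (2*b+1) t \<ge> (1-t) powr (-(1-a-b))"
proof -
  have r: "2*b+1 > 0" using b by simp
  have cmp: "be (1-a-b) n \<le> hc (1-a) (b+1) (2*b+1) n" for n
  proof (induction n)
    case 0 thus ?case by (simp add: be_def)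
  next
    case (Suc n)
    have f: "(1-a-b+n)/(n+1) \<le> ((1-a+n)*(b+1+n)/((2*b+1+n)*(n+1)))"
    proof -
      have pos: "2*b+1+n > 0" "real n + 1 > 0" using b by (auto simp: add_pos_nonneg)
      have "(1-a-b+n)*(2*b+1+n) \<le> (1-a+n)*(b+1+n)"
        using a b by (simp add: algebra_simps)
      hence "(1-a-b+n)/(n+1) \<le> ((1-a+n)*(b+1+n)/(2*b+1+n))/(n+1)"
        using pos by (intro divide_right_mono) (simp_all add: le_divide_eq)
      thus ?thesis by (simp add: field_simps)
    qed
    have "be (1-a-b) (Suc n) = be (1-a-b) n * ((1-a-b+n)/(n+1))" by (simp add: be_Suc)
    also have "\<dots> \<le> hc (1-a) (b+1) (2*b+1) n * ((1-a-b+n)/(n+1))"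
      using Suc ab by (intro mult_right_mono) auto
    also have "\<dots> \<le> hc (1-a) (b+1) (2*b+1) n * ((1-a+n)*(b+1+n)/((2*b+1+n)*(n+1)))"
      using f hc_nonneg[of "1-a" "b+1" "2*b+1" n] a b by (intro mult_left_mono) auto
    also have "\<dots> = hc (1-a) (b+1) (2*b+1) (Suc n)"
      unfolding hc_Suc[OF r] by (simp add: algebra_simps)
    finally show ?case .
  qed
  have sm: "summable (\<lambda>n. hc (1-a) (b+1) (2*b+1) n * t^n)"
    by (rule hyp_summable_le) (use a b t in auto)
  have sb: "(\<lambda>n. be (1-a-b) n * t^n) sums (1-t) powr (-(1-a-b))" using be_sums t by blast
  have "(\<Sum>n. be (1-a-b) n * t^n) \<le> (\<Sum>n. hc (1-a) (b+1) (2*b+1) n * t^n)"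
    by (rule suminf_le[OF _ sums_summable[OF sb] sm]) (use cmp t in \<open>simp add: mult_right_mono\<close>)
  thus ?thesis unfolding hyp2F1_eq using sb sums_unique by metis
qed

lemma G_deriv0:
  assumes a: "0 < a" "a < 1" and b: "b > 0"
  shows "DERIV (G a b m) 0 :> ((a+2*b) - m*(2*b+1))/(2*b+1)"
proof -
  have d1: "DERIV (hyp2F1 (1-a) b (2*b+1)) 0 :> (1-a)*b/(2*b+1)"
    by (rule hyp_deriv0) (use a b in auto)
  have d2: "DERIV (hyp2F1 (1-a) (b+1) (2*b+1)) 0 :> (1-a)*(b+1)/(2*b+1)"
    by (rule hyp_deriv0) (use a b in auto)
  have dm: "DERIV (\<lambda>t::real. 1 - t) 0 :> -1"
    by (auto intro!: derivative_eq_intros)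
  have d3: "DERIV (\<lambda>t. (1 - t) powr (1-m)) 0 :> (1-m) * (1-0) powr (1-m-1) * (-1)"
    using DERIV_fun_powr[OF dm, of "1-m"] by simp
  have "DERIV (\<lambda>t. hyp2F1 (1-a) b (2*b+1) t - (1 - t) powr (1-m) * hyp2F1 (1-a) (b+1) (2*b+1) t) 0
     :> (1-a)*b/(2*b+1) - ((1 - 0) powr (1-m) * ((1-a)*(b+1)/(2*b+1))
         + (1-m) * (1-0) powr (1-m-1) * (-1) * hyp2F1 (1-a) (b+1) (2*b+1) 0)"
    by (intro DERIV_diff DERIV_mult' d1 d2 d3)
  moreover have "G a b m = (\<lambda>t. hyp2F1 (1-a) b (2*b+1) t - (1 - t) powr (1-m) * hyp2F1 (1-a) (b+1) (2*b+1) t)"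
    by (rule ext) (simp add: G_def)
  moreover have "(1-a)*b/(2*b+1) - ((1 - 0) powr (1-m) * ((1-a)*(b+1)/(2*b+1))
         + (1-m) * (1-0) powr (1-m-1) * (-1) * hyp2F1 (1-a) (b+1) (2*b+1) 0) = ((a+2*b) - m*(2*b+1))/(2*b+1)"
  proof -
    have c: "2*b+1 \<noteq> 0" using b by simp
    show ?thesis by (simp add: hyp_at0 divide_simps c) (simp add: algebra_simps)
  qed
  ultimately show ?thesis by simp
qed

lemma G_at0: "G a b m 0 = 0" by (simp add: G_def hyp_at0)

lemma m0_iff: assumes "b > 0" shows "m < m0 a b \<longleftrightarrow> (a+2*b) - m*(2*b+1) > 0"
  using assms by (simp add: m0_def field_simps)

lemma G_pos_near0:
  assumes a: "0 < a" "a < 1" and b: "b > 0" and m: "m < m0 a b"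
  shows "\<exists>t. 0 < t \<and> t < 1 \<and> G a b m t > 0"
proof -
  have "((a+2*b) - m*(2*b+1))/(2*b+1) > 0" using m m0_iff[OF b] b by simp
  from DERIV_pos_inc_right[OF G_deriv0[OF a b] this]
  obtain d where d: "d > 0" "\<And>h. h > 0 \<Longrightarrow> h < d \<Longrightarrow> G a b m 0 < G a b m (0 + h)" by blast
  show ?thesis using d(2)[of "min (d/2) (1/2)"] d(1) G_at0[of a b m]
    by (intro exI[of _ "min (d/2) (1/2)"]) auto
qed

lemma G_neg_near0:
  assumes a: "0 < a" "a < 1" and b: "b > 0" and m: "m > m0 a b"
  shows "\<exists>t. 0 < t \<and> t < 1 \<and> G a b m t < 0"
proof -
  have "((a+2*b) - m*(2*b+1))/(2*b+1) < 0" using m b by (simp add: m0_def field_simps)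
  from DERIV_neg_dec_right[OF G_deriv0[OF a b] this]
  obtain d where d: "d > 0" "\<And>h. h > 0 \<Longrightarrow> h < d \<Longrightarrow> G a b m 0 > G a b m (0 + h)" by blast
  show ?thesis using d(2)[of "min (d/2) (1/2)"] d(1) G_at0[of a b m]
    by (intro exI[of _ "min (d/2) (1/2)"]) auto
qed

lemma choose_u:
  fixes K \<delta> :: real assumes K: "K \<ge> 1" and d: "\<delta> > 0"
  defines "u \<equiv> (1/(2*K+2)) powr (1/\<delta>)"
  shows "0 < u" "u < 1" "u powr \<delta> = 1/(2*K+2)" "\<And>e. u powr (e*\<delta>) = (1/(2*K+2)) powr e"
proof -
  have c: "0 < 1/(2*K+2)" "1/(2*K+2) < 1" using K by auto
  show "0 < u" unfolding u_def using c by simp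
  show "u < 1" unfolding u_def using c d powr_less_mono2[of "1/\<delta>" "1/(2*K+2)" 1] by simp
  show pe: "u powr (e*\<delta>) = (1/(2*K+2)) powr e" for e
    unfolding u_def powr_powr using d by simp
  show "u powr \<delta> = 1/(2*K+2)" using pe[of 1] K by simp
qed

lemma G_neg_near1:
  assumes a: "0 < a" "a < 1" and b: "b > 0" and ab: "a + b < 1" "a + b < m" and m: "m < 1"
  shows "\<exists>t. 0 < t \<and> t < 1 \<and> G a b m t < 0"
proof -
  define \<delta> where "\<delta> = (m-a-b)/2"
  have d: "\<delta> > 0" using ab unfolding \<delta>_def by simp
  obtain K where K: "\<And>t. 0 \<le> t \<Longrightarrow> t < 1 \<Longrightarrow> (\<Sum>n. hc (1-a) b (2*b+1) n * t^n) \<le> K * (1 - t) powr (-\<delta>)"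
    using hc_upper[of "1-a" b "2*b+1" \<delta>] a b d by auto
  define K' where "K' = max K 1"
  have K1: "K' \<ge> 1" unfolding K'_def by simp
  define u where "u = (1/(2*K'+2)) powr (1/\<delta>)"
  note U = choose_u[OF K1 d, folded u_def]
  define t where "t = 1 - u"
  have t: "0 < t" "t < 1" using U unfolding t_def by auto
  have "hyp2F1 (1-a) b (2*b+1) t \<le> K * u powr (-\<delta>)"
    using K[of t] t unfolding hyp2F1_eq t_def by simp
  also have "\<dots> \<le> K' * u powr (-\<delta>)" unfolding K'_def by (intro mult_right_mono) auto
  also have "u powr (-\<delta>) = 2*K'+2" using U(4)[of "-1"] K1 by (simp add: powr_minus_divide)
  finally have F1: "hyp2F1 (1-a) b (2*b+1) t \<le> K' * (2*K'+2)" .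
  have "u powr (1-m) * u powr (-(1-a-b)) \<le> (1-t) powr (1-m) * hyp2F1 (1-a) (b+1) (2*b+1) t"
  proof -
    have "u powr (-(1-a-b)) \<le> hyp2F1 (1-a) (b+1) (2*b+1) t"
      using F2_lower[of a b t] a b ab t unfolding t_def by simp
    thus ?thesis unfolding t_def by (simp add: mult_left_mono)
  qed
  moreover have "u powr (1-m) * u powr (-(1-a-b)) = (2*K'+2)^2"
  proof -
    have "u powr (1-m) * u powr (-(1-a-b)) = u powr ((-2)*\<delta>)"
    proof -
      have "(1-m) + (-(1-a-b)) = (-2)*\<delta>" unfolding \<delta>_def by simp
      thus ?thesis unfolding powr_add[symmetric] by simp
    qed
    also have "\<dots> = (1/(2*K'+2)) powr (-2)" by (rule U(4))
    also have "\<dots> = (2*K'+2)^2" using K1 by (simp add: powr_minus_divide powr_realpow divide_simps)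
    finally show ?thesis .
  qed
  ultimately have F2: "(2*K'+2)^2 \<le> (1-t) powr (1-m) * hyp2F1 (1-a) (b+1) (2*b+1) t" by simp
  have "K' * (2*K'+2) < (2*K'+2)^2" using K1 by (simp add: power2_eq_square)
  hence "G a b m t < 0" unfolding G_def using F1 F2 by simp
  thus ?thesis using t by blast
qed

lemma G_pos_near1:
  assumes a: "0 < a" "a < 1" and b: "b > 0" and m: "m < 1" "m < a + b"
  shows "\<exists>t. 0 < t \<and> t < 1 \<and> G a b m t > 0"
proof -
  define \<sigma> where "\<sigma> = (max 0 (1-a-b) + (1-m))/2"
  define \<delta> where "\<delta> = 1 - m - \<sigma>"
  have sg: "\<sigma> > 0" "1-a-b < \<sigma>" using m unfolding \<sigma>_def by auto
  have d: "\<delta> > 0" using m unfolding \<delta>_def \<sigma>_def by auto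
  obtain K where K: "\<And>t. 0 \<le> t \<Longrightarrow> t < 1 \<Longrightarrow> (\<Sum>n. hc (1-a) (b+1) (2*b+1) n * t^n) \<le> K * (1 - t) powr (-\<sigma>)"
    using hc_upper[of "1-a" "b+1" "2*b+1" \<sigma>] a b sg by auto
  define K' where "K' = max K 1"
  have K1: "K' \<ge> 1" unfolding K'_def by simp
  define u where "u = (1/(2*K'+2)) powr (1/\<delta>)"
  note U = choose_u[OF K1 d, folded u_def]
  define t where "t = 1 - u"
  have t: "0 < t" "t < 1" using U unfolding t_def by auto
  have "hyp2F1 (1-a) (b+1) (2*b+1) t \<le> K * u powr (-\<sigma>)"
    using K[of t] t unfolding hyp2F1_eq t_def by simp
  also have "\<dots> \<le> K' * u powr (-\<sigma>)" unfolding K'_def by (intro mult_right_mono) auto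
  finally have "u powr (1-m) * hyp2F1 (1-a) (b+1) (2*b+1) t \<le> u powr (1-m) * (K' * u powr (-\<sigma>))"
    by (intro mult_left_mono) auto
  hence "(1-t) powr (1-m) * hyp2F1 (1-a) (b+1) (2*b+1) t \<le> u powr (1-m) * (K' * u powr (-\<sigma>))"
    unfolding t_def by simp
  also have "\<dots> = K' * u powr \<delta>"
    unfolding \<delta>_def by (simp add: powr_add[symmetric] algebra_simps)
  also have "\<dots> = K' / (2*K'+2)" using U(3) by simp
  also have "\<dots> < 1" using K1 by simp
  finally have F2: "(1-t) powr (1-m) * hyp2F1 (1-a) (b+1) (2*b+1) t < 1" .
  have "hc (1-a) b (2*b+1) 0 * t^0 \<le> (\<Sum>n. hc (1-a) b (2*b+1) n * t^n)"
    using sum_le_suminf[of "\<lambda>n. hc (1-a) b (2*b+1) n * t^n" "{0}"]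
      hyp_summable_le[of "1-a" b "2*b+1" t] hc_nonneg[of "1-a" b "2*b+1"] a b t by auto
  hence F1: "1 \<le> hyp2F1 (1-a) b (2*b+1) t" unfolding hyp2F1_eq by simp
  have "G a b m t > 0" unfolding G_def using F1 F2 by simp
  thus ?thesis using t by blast
qed

lemma m0_lt1: assumes "a < 1" "b > 0" shows "m0 a b < 1"
  using assms by (simp add: m0_def divide_less_eq)

lemma key1: assumes b: "b > 0" and "a + b \<le> m0 a b" shows "a + b \<le> 1/2"
proof -
  have "(a+b)*(1+2*b) \<le> a + 2*b" using assms by (simp add: m0_def le_divide_eq)
  hence "b * (2*(a+b) - 1) \<le> 0" by (simp add: algebra_simps)
  thus ?thesis using b by (simp add: mult_le_0_iff)
qed

lemma key2: assumes b: "b > 0" and "m0 a b \<le> a + b" shows "1/2 \<le> a + b"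
proof -
  have "a + 2*b \<le> (a+b)*(1+2*b)" using assms by (simp add: m0_def divide_le_eq)
  hence "0 \<le> b * (2*(a+b) - 1)" by (simp add: algebra_simps)
  thus ?thesis using b by (simp add: zero_le_mult_iff)
qed

theorem lemma4:
  fixes a b m :: real
  assumes "0 < a" and "a < 1" and "b > 0"
  shows "((\<forall>t. 0 < t \<and> t < 1 \<longrightarrow> G a b m t \<ge> 0) \<longrightarrow> (a, b, m) \<in> Eplus)
       \<and> ((\<forall>t. 0 < t \<and> t < 1 \<longrightarrow> G a b m t \<le> 0) \<longrightarrow> (a, b, m) \<in> Eminus)"
proof (intro conjI impI)
  assume H: "\<forall>t. 0 < t \<and> t < 1 \<longrightarrow> G a b m t \<ge> 0"
  have m: "m \<le> m0 a b"
  proof (rule ccontr)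
    assume "\<not> m \<le> m0 a b"
    then obtain t where "0 < t" "t < 1" "G a b m t < 0" using G_neg_near0 assms by force
    thus False using H by force
  qed
  have n: "\<not> (a + b < 1 \<and> a + b < m \<and> m < 1)"
  proof
    assume "a + b < 1 \<and> a + b < m \<and> m < 1"
    then obtain t where "0 < t" "t < 1" "G a b m t < 0" using G_neg_near1 assms by force
    thus False using H by force
  qed
  have m1: "m < 1" using m m0_lt1[of a b] assms by simp
  show "(a, b, m) \<in> Eplus"
  proof (cases "a + b \<ge> 1")
    case True thus ?thesis using m m1 unfolding Eplus_def by simp
  next
    case False
    hence "m \<le> a + b" using n m1 by auto
    thus ?thesis using m m1 False key1[of b a] assms unfolding Eplus_def by auto
  qed
next
  assume H: "\<forall>t. 0 < t \<and> t < 1 \<longrightarrow> G a b m t \<le> 0"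
  have m: "m0 a b \<le> m"
  proof (rule ccontr)
    assume "\<not> m0 a b \<le> m"
    then obtain t where "0 < t" "t < 1" "G a b m t > 0" using G_pos_near0 assms by force
    thus False using H by force
  qed
  have n: "\<not> (m < 1 \<and> m < a + b)"
  proof
    assume "m < 1 \<and> m < a + b"
    then obtain t where "0 < t" "t < 1" "G a b m t > 0" using G_pos_near1 assms by force
    thus False using H by force
  qed
  show "(a, b, m) \<in> Eminus"
  proof (cases "a + b \<ge> 1")
    case True thus ?thesis using m n unfolding Eminus_def by auto
  next
    case False
    hence "m \<ge> a + b" using n by auto
    thus ?thesis using m False key2[of b a] assms unfolding Eminus_def by auto
  qed
qed

end
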